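(* Let $L$ be one of the Lie algebras $\mathcal{L}$, $\mathrm{Vir}$, $\widetilde{\mathcal{W}}$, $\mathcal{W}$ (defined in the context), with its $\mathbb{Z}$-gradation $L=\bigoplus_{i} L_i$, and for $k\in\mathbb{Z}$ put $L^{(k)}=\sum_{i\ge k}L_i$. Let $V$ be a simple $L$-module. Then the following conditions are equivalent: (a) $V$ satisfies Condition A: for every $v\in V$ there is a positive integer $n$ such that $L_i v=0$ for all $i\ge n$; (b) there exist $0\ne v\in V$ and $s\in\mathbb{N}$ such that $L^{(s)}v=0$; (c) there exists $k\in\mathbb{N}$ such that $V$ is a locally finite $L^{(k)}$-module (every $v\in V$ lies in a finite-dimensional $L^{(k)}$-submodule); (d) there exists $m\in\mathbb{N}$ such that $V$ is a locally nilpotent $L^{(m)}$-module (for every $v\in V$ there is $n\in\mathbb{N}$ with $a_1a_2\cdots a_n v=0$ for all $a_1,\dots,a_n\in L^{(m)}$).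
   Context: $\mathbb{N}$ denotes the positive integers. The twisted Heisenberg–Virasoro algebra $\mathcal{L}$ has basis $\{d_n,I_n,z_1,z_2,z_3\mid n\in\mathbb{Z}\}$ (where $d_n=t^{n+1}\frac{d}{dt}$, $I_n=t^n$) with brackets $[d_n,d_m]=(m-n)d_{m+n}+\delta_{n,-m}\frac{n^3-n}{12}z_1$, $[d_n,I_m]=mI_{m+n}+\delta_{n,-m}(n^2+n)z_2$, $[I_n,I_m]=n\delta_{n,-m}z_3$, and $z_1,z_2,z_3$ central. Its gradation is $\mathcal{L}_n=\mathbb{C}d_n+\mathbb{C}I_n$ for $n\neq0$ and $\mathcal{L}_0=\mathbb{C}d_0+\mathbb{C}I_0+\mathbb{C}z_1+\mathbb{C}z_2+\mathbb{C}z_3$. $\mathrm{Vir}$ is the subalgebra spanned by $\{d_i,z_1\mid i\in\mathbb{Z}\}$; $\widetilde{\mathcal{W}}=\mathbb{C}[t]\frac{d}{dt}+\mathbb{C}[t]$ is the subalgebra spanned by $\{d_i\,(i\ge -1),\ I_i\,(i\ge 0)\}$; $\mathcal{W}=\mathrm{Der}(\mathbb{C}[t])$ is spanned by $\{d_i\mid i\ge -1\}$. Each is graded by giving $d_i,I_i$ degree $i$ and $z_j$ degree $0$. *)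

theory Defs
  imports Complex_Main
begin

(* Basis of the twisted Heisenberg-Virasoro algebra:
   D n = d_n, I n = I_n, Z1, Z2, Z3 = z_1, z_2, z_3. *)
datatype gen = D int | I int | Z1 | Z2 | Z3

datatype alg = HV (* \<L> *) | Vir | Wt (* \<widetilde>\<W> *) | W (* \<W> = Der C[t] *)

fun inB :: "alg \<Rightarrow> gen \<Rightarrow> bool" where
  "inB HV g = True"
| "inB Vir (D n) = True"
| "inB Vir Z1 = True"
| "inB Vir _ = False"
| "inB Wt (D n) = (n \<ge> -1)"
| "inB Wt (I n) = (n \<ge> 0)"
| "inB Wt _ = False"
| "inB W (D n) = (n \<ge> -1)"
| "inB W _ = False"

fun deg :: "gen \<Rightarrow> int" where
  "deg (D n) = n" | "deg (I n) = n" | "deg Z1 = 0" | "deg Z2 = 0" | "deg Z3 = 0"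

(* elements of the Lie algebra: finite complex linear combinations of basis elements,
   represented by their coefficient functions *)
definition elems :: "alg \<Rightarrow> (gen \<Rightarrow> complex) set" where
  "elems A = {a. finite {g. a g \<noteq> 0} \<and> (\<forall>g. a g \<noteq> 0 \<longrightarrow> inB A g)}"

definition comp :: "alg \<Rightarrow> int \<Rightarrow> (gen \<Rightarrow> complex) set" where
  "comp A i = {a \<in> elems A. \<forall>g. a g \<noteq> 0 \<longrightarrow> deg g = i}"

definition upper :: "alg \<Rightarrow> int \<Rightarrow> (gen \<Rightarrow> complex) set" where
  "upper A k = {a \<in> elems A. \<forall>g. a g \<noteq> 0 \<longrightarrow> deg g \<ge> k}"

definition bv :: "gen \<Rightarrow> gen \<Rightarrow> complex" where
  "bv g = (\<lambda>x. if x = g then 1 else 0)"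

definition kd :: "int \<Rightarrow> int \<Rightarrow> complex" where
  "kd n m = (if n = m then 1 else 0)"

fun bracket :: "gen \<Rightarrow> gen \<Rightarrow> gen \<Rightarrow> complex" where
  "bracket (D n) (D m) = (\<lambda>x. of_int (m - n) * bv (D (m + n)) x
        + kd n (-m) * (of_int (n^3 - n) / 12) * bv Z1 x)"
| "bracket (D n) (I m) = (\<lambda>x. of_int m * bv (I (m + n)) x
        + kd n (-m) * of_int (n^2 + n) * bv Z2 x)"
| "bracket (I m) (D n) = (\<lambda>x. - (of_int m * bv (I (m + n)) x
        + kd n (-m) * of_int (n^2 + n) * bv Z2 x))"
| "bracket (I n) (I m) = (\<lambda>x. of_int n * kd n (-m) * bv Z3 x)"
| "bracket _ _ = (\<lambda>x. 0)"

definition act :: "(complex \<Rightarrow> 'v \<Rightarrow> 'v) \<Rightarrow> (gen \<Rightarrow> 'v \<Rightarrow> 'v)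
    \<Rightarrow> (gen \<Rightarrow> complex) \<Rightarrow> 'v \<Rightarrow> 'v::ab_group_add" where
  "act sc rho a v = (\<Sum>g\<in>{g. a g \<noteq> 0}. sc (a g) (rho g v))"

(* a module over the Lie algebra A: a complex vector space (the whole type 'v,
   scalar multiplication sc) with linear operators rho g for the basis elements g of A
   satisfying rho g rho h - rho h rho g = rho [g,h] *)
definition is_module :: "alg \<Rightarrow> (complex \<Rightarrow> 'v \<Rightarrow> 'v) \<Rightarrow> (gen \<Rightarrow> 'v \<Rightarrow> 'v::ab_group_add) \<Rightarrow> bool" where
  "is_module A sc rho \<longleftrightarrow> vector_space sc
     \<and> (\<forall>g. inB A g \<longrightarrow> Vector_Spaces.linear sc sc (rho g))
     \<and> (\<forall>g h v. inB A g \<and> inB A h \<longrightarrow>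
            rho g (rho h v) - rho h (rho g v) = act sc rho (bracket g h) v)"

definition is_submodule :: "alg \<Rightarrow> (complex \<Rightarrow> 'v \<Rightarrow> 'v) \<Rightarrow> (gen \<Rightarrow> 'v \<Rightarrow> 'v::ab_group_add) \<Rightarrow> 'v set \<Rightarrow> bool" where
  "is_submodule A sc rho U \<longleftrightarrow> module.subspace sc U \<and> (\<forall>g u. inB A g \<and> u \<in> U \<longrightarrow> rho g u \<in> U)"

definition simple_module :: "alg \<Rightarrow> (complex \<Rightarrow> 'v \<Rightarrow> 'v) \<Rightarrow> (gen \<Rightarrow> 'v \<Rightarrow> 'v::ab_group_add) \<Rightarrow> bool" where
  "simple_module A sc rho \<longleftrightarrow> is_module A sc rho \<and> (\<exists>v. v \<noteq> (0::'v))
     \<and> (\<forall>U. is_submodule A sc rho U \<longrightarrow> U = {0} \<or> U = UNIV)"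

definition condA :: "alg \<Rightarrow> (complex \<Rightarrow> 'v \<Rightarrow> 'v) \<Rightarrow> (gen \<Rightarrow> 'v \<Rightarrow> 'v::ab_group_add) \<Rightarrow> bool" where
  "condA A sc rho \<longleftrightarrow> (\<forall>v. \<exists>n::int. n > 0 \<and>
       (\<forall>i \<ge> n. \<forall>a \<in> comp A i. act sc rho a v = 0))"

definition condB :: "alg \<Rightarrow> (complex \<Rightarrow> 'v \<Rightarrow> 'v) \<Rightarrow> (gen \<Rightarrow> 'v \<Rightarrow> 'v::ab_group_add) \<Rightarrow> bool" where
  "condB A sc rho \<longleftrightarrow> (\<exists>v s::int. v \<noteq> 0 \<and> s \<ge> 1 \<and>
       (\<forall>a \<in> upper A s. act sc rho a v = 0))"

definition condC :: "alg \<Rightarrow> (complex \<Rightarrow> 'v \<Rightarrow> 'v) \<Rightarrow> (gen \<Rightarrow> 'v \<Rightarrow> 'v::ab_group_add) \<Rightarrow> bool" where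
  "condC A sc rho \<longleftrightarrow> (\<exists>k::int. k \<ge> 1 \<and> (\<forall>v. \<exists>U.
       module.subspace sc U \<and> (\<exists>B. finite B \<and> U = module.span sc B) \<and> v \<in> U \<and>
       (\<forall>a \<in> upper A k. \<forall>u \<in> U. act sc rho a u \<in> U)))"

definition condD :: "alg \<Rightarrow> (complex \<Rightarrow> 'v \<Rightarrow> 'v) \<Rightarrow> (gen \<Rightarrow> 'v \<Rightarrow> 'v::ab_group_add) \<Rightarrow> bool" where
  "condD A sc rho \<longleftrightarrow> (\<exists>m::int. m \<ge> 1 \<and> (\<forall>v. \<exists>n::nat. n \<ge> 1 \<and>
       (\<forall>as. length as = n \<and> set as \<subseteq> upper A m \<longrightarrow>
          foldr (\<lambda>a w. act sc rho a w) as v = 0)))"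

end

theory Submission
  imports Defs "HOL-Computational_Algebra.Polynomial" "HOL-Library.Function_Algebras"
begin

lemma inB_D: "i \<ge> -1 \<Longrightarrow> inB A (D i)"
  by (cases A) auto

lemma bracket_supp:
  assumes "inB A g" "inB A h" "bracket g h x \<noteq> 0"
  shows "inB A x \<and> deg x = deg g + deg h"
proof -
  have c3: "n^3 - n = 0" if "n \<ge> -1" "n \<le> 1" for n :: int
  proof -
    have "n = -1 \<or> n = 0 \<or> n = 1" using that by auto
    thus ?thesis by auto
  qed
  have c2: "n^2 + n = 0" if "n \<ge> -1" "n \<le> 0" for n :: int
  proof -
    have "n = -1 \<or> n = 0" using that by auto
    thus ?thesis by auto
  qed
  have c4: "n^2 = n" if "n \<ge> 0" "n \<le> 1" for n :: int
  proof -
    have "n = 1 \<or> n = 0" using that by auto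
    thus ?thesis by auto
  qed
  show ?thesis
    using assms
    apply (cases g; cases h; cases A; cases x)
    apply (auto simp: bv_def kd_def split: if_splits)
    using c3 c2 c4 by (auto simp: algebra_simps)
qed

lemma bv_elems: "inB A g \<Longrightarrow> bv g \<in> elems A"
  by (auto simp: elems_def bv_def split: if_splits)

lemma bv_upper: "inB A g \<Longrightarrow> deg g \<ge> k \<Longrightarrow> bv g \<in> upper A k"
  unfolding upper_def using bv_elems[of A g] by (auto simp: bv_def split: if_splits)

lemma bv_comp: "inB A g \<Longrightarrow> bv g \<in> comp A (deg g)"
  unfolding comp_def using bv_elems[of A g] by (auto simp: bv_def split: if_splits)

locale hm =
  fixes A :: alg and sc :: "complex \<Rightarrow> 'v::ab_group_add \<Rightarrow> 'v" and rho :: "gen \<Rightarrow> 'v \<Rightarrow> 'v"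
  assumes ism: "is_module A sc rho"
begin

sublocale vector_space sc using ism unfolding is_module_def by auto

lemma lin: "inB A g \<Longrightarrow> Vector_Spaces.linear sc sc (rho g)"
  using ism unfolding is_module_def by auto

lemma comm: "inB A g \<Longrightarrow> inB A h \<Longrightarrow>
   rho g (rho h v) = rho h (rho g v) + act sc rho (bracket g h) v"
  using ism unfolding is_module_def by (metis diff_add_cancel add.commute)

lemma rho_add: "inB A g \<Longrightarrow> rho g (x + y) = rho g x + rho g y"
proof -
  assume "inB A g"
  then interpret l: Vector_Spaces.linear sc sc "rho g" by (rule lin)
  show ?thesis by (rule l.add)
qed

lemma rho_scale: "inB A g \<Longrightarrow> rho g (sc c x) = sc c (rho g x)"
proof -
  assume "inB A g"
  then interpret l: Vector_Spaces.linear sc sc "rho g" by (rule lin)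
  show ?thesis by (rule l.scale)
qed

lemma rho_0: "inB A g \<Longrightarrow> rho g 0 = 0"
proof -
  assume "inB A g"
  then interpret l: Vector_Spaces.linear sc sc "rho g" by (rule lin)
  show ?thesis by (rule l.zero)
qed

lemma rho_diff: "inB A g \<Longrightarrow> rho g (x - y) = rho g x - rho g y"
proof -
  assume "inB A g"
  then interpret l: Vector_Spaces.linear sc sc "rho g" by (rule lin)
  show ?thesis by (rule l.diff)
qed

lemma rho_sum: "inB A g \<Longrightarrow> rho g (\<Sum>i\<in>F. f i) = (\<Sum>i\<in>F. rho g (f i))"
proof -
  assume "inB A g"
  then interpret l: Vector_Spaces.linear sc sc "rho g" by (rule lin)
  show ?thesis by (rule l.sum)
qed

lemma rho_span: "inB A g \<Longrightarrow> u \<in> span X \<Longrightarrow> (\<And>x. x \<in> X \<Longrightarrow> rho g x \<in> span Y) \<Longrightarrow> rho g u \<in> span Y"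
proof -
  assume g: "inB A g" and u: "u \<in> span X" and h: "\<And>x. x \<in> X \<Longrightarrow> rho g x \<in> span Y"
  from u show ?thesis
  proof (induct rule: span_induct_alt)
    case base then show ?case by (simp add: rho_0[OF g] span_zero)
  next
    case (step c x y) then show ?case
      by (simp add: rho_add[OF g] rho_scale[OF g] h span_add span_scale)
  qed
qed

lemma act_bv: "act sc rho (bv g) v = rho g v"
proof -
  have "{x. bv g x \<noteq> 0} = {g}" by (auto simp: bv_def)
  thus ?thesis by (simp add: act_def bv_def)
qed

lemma act_cbv: "act sc rho (\<lambda>x. c * bv g x) v = sc c (rho g v)"
proof (cases "c = 0")
  case True then show ?thesis by (simp add: act_def)
next
  case False
  have "{x. c * bv g x \<noteq> 0} = {g}" using False by (auto simp: bv_def)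
  thus ?thesis by (simp add: act_def bv_def)
qed

lemma act_zero: "(\<And>g. a g \<noteq> 0 \<Longrightarrow> rho g v = 0) \<Longrightarrow> act sc rho a v = 0"
  unfolding act_def by (intro sum.neutral) auto

lemma act_span: "(\<And>g. a g \<noteq> 0 \<Longrightarrow> rho g v \<in> span Y) \<Longrightarrow> act sc rho a v \<in> span Y"
  unfolding act_def by (intro span_sum) (auto intro: span_scale)

lemma act_subspace: "subspace U \<Longrightarrow> (\<And>g. a g \<noteq> 0 \<Longrightarrow> rho g v \<in> U) \<Longrightarrow> act sc rho a v \<in> U"
  unfolding act_def by (intro subspace_sum) (auto intro: subspace_scale)

lemma bracket_DD: "n + m \<noteq> 0 \<Longrightarrow> act sc rho (bracket (D n) (D m)) v = sc (of_int (m - n)) (rho (D (m + n)) v)"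
  by (simp add: kd_def act_cbv)

lemma bracket_DI: "n + m \<noteq> 0 \<Longrightarrow> act sc rho (bracket (D n) (I m)) v = sc (of_int m) (rho (I (m + n)) v)"
  by (simp add: kd_def act_cbv)


definition mon :: "gen list \<Rightarrow> 'v \<Rightarrow> 'v" where "mon m w = foldr rho m w"
definition negsum :: "gen list \<Rightarrow> int" where "negsum m = sum_list (map (\<lambda>g. max 0 (- deg g)) m)"
definition dsum :: "gen list \<Rightarrow> int" where "dsum m = sum_list (map deg m)"
definition AL :: "gen list \<Rightarrow> bool" where "AL m \<longleftrightarrow> (\<forall>g\<in>set m. inB A g)"

lemma mon_Nil[simp]: "mon [] w = w" and mon_Cons[simp]: "mon (g # m) w = rho g (mon m w)"
  by (auto simp: mon_def)
lemma negsum_Nil[simp]: "negsum [] = 0" and negsum_Cons[simp]: "negsum (g # m) = max 0 (- deg g) + negsum m"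
  by (auto simp: negsum_def)
lemma dsum_Nil[simp]: "dsum [] = 0" and dsum_Cons[simp]: "dsum (g # m) = deg g + dsum m"
  by (auto simp: dsum_def)
lemma AL_Nil[simp]: "AL []" and AL_Cons[simp]: "AL (g # m) \<longleftrightarrow> inB A g \<and> AL m"
  by (auto simp: AL_def)
lemma negsum_nonneg: "negsum m \<ge> 0"
  by (induct m) auto

lemma kill:
  assumes H: "\<And>g. inB A g \<Longrightarrow> deg g \<ge> s \<Longrightarrow> rho g v0 = 0"
  shows "AL m \<Longrightarrow> inB A x \<Longrightarrow> deg x \<ge> s + negsum m \<Longrightarrow> rho x (mon m v0) = 0"
proof (induct m arbitrary: x)
  case Nil then show ?case using H by simp
next
  case (Cons y m)
  have y: "inB A y" and m: "AL m" using Cons.prems by auto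
  have ns: "negsum (y # m) \<ge> - deg y + negsum m"
     "negsum (y # m) \<ge> negsum m" using negsum_nonneg[of m] by auto
  have "rho x (mon (y # m) v0) = rho y (rho x (mon m v0)) + act sc rho (bracket x y) (mon m v0)"
    using comm[OF Cons.prems(2) y] by simp
  also have "rho x (mon m v0) = 0" using Cons.hyps[OF m Cons.prems(2)] Cons.prems(3) ns by auto
  also have "act sc rho (bracket x y) (mon m v0) = 0"
  proof (rule act_zero)
    fix z assume "bracket x y z \<noteq> 0"
    from bracket_supp[OF Cons.prems(2) y this] have "inB A z" "deg z = deg x + deg y" by auto
    then show "rho z (mon m v0) = 0" using Cons.hyps[OF m] Cons.prems(3) ns by auto
  qed
  finally show ?case using rho_0[OF y] by simp
qed

lemma mon_span_univ:
  assumes simp: "simple_module A sc rho" and v0: "v0 \<noteq> 0"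
  shows "span {mon m v0 | m. AL m} = UNIV"
proof -
  let ?S = "span {mon m v0 | m. AL m}"
  have "is_submodule A sc rho ?S"
    unfolding is_submodule_def
  proof (intro conjI allI impI)
    show "subspace ?S" by simp
    fix g u assume gu: "inB A g \<and> u \<in> ?S"
    show "rho g u \<in> ?S"
    proof (rule rho_span[of g u])
      fix x assume "x \<in> {mon m v0 | m. AL m}"
      then obtain m where "x = mon m v0" "AL m" by auto
      then have "rho g x = mon (g # m) v0" "AL (g # m)" using gu by auto
      then show "rho g x \<in> ?S" by (intro span_base) blast
    qed (use gu in auto)
  qed
  then have "?S = {0} \<or> ?S = UNIV" using simp unfolding simple_module_def by auto
  moreover have "v0 \<in> ?S" by (rule span_base) (auto intro!: exI[of _ "[]"])
  ultimately show ?thesis using v0 by auto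
qed

lemma condB_basis:
  assumes "condB A sc rho"
  obtains v0 s where "v0 \<noteq> 0" "s \<ge> 1" "\<And>g. inB A g \<Longrightarrow> deg g \<ge> s \<Longrightarrow> rho g v0 = 0"
proof -
  from assms obtain v0 s where "v0 \<noteq> 0" "s \<ge> 1" "\<forall>a\<in>upper A s. act sc rho a v0 = 0"
    unfolding condB_def by auto
  then show ?thesis using that bv_upper act_bv by metis
qed

lemma basis_condB:
  assumes "v0 \<noteq> 0" "s \<ge> 1" "\<And>g. inB A g \<Longrightarrow> deg g \<ge> s \<Longrightarrow> rho g v0 = 0"
  shows "condB A sc rho"
  unfolding condB_def
proof (intro exI conjI ballI)
  fix a assume "a \<in> upper A s"
  then show "act sc rho a v0 = 0"
    by (intro act_zero) (auto simp: upper_def elems_def assms(3))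
qed (use assms in auto)

lemma B_imp_A:
  assumes simp: "simple_module A sc rho" and B: "condB A sc rho"
  shows "condA A sc rho"
proof -
  obtain v0 s where v0: "v0 \<noteq> 0" "s \<ge> 1" and H: "\<And>g. inB A g \<Longrightarrow> deg g \<ge> s \<Longrightarrow> rho g v0 = 0"
    using condB_basis[OF B] by blast
  have *: "\<exists>n>0. \<forall>g. inB A g \<and> deg g \<ge> n \<longrightarrow> rho g w = 0" for w
  proof -
    have "w \<in> span {mon m v0 | m. AL m}" using mon_span_univ[OF simp v0(1)] by auto
    then show ?thesis
    proof (induct rule: span_induct_alt)
      case base then show ?case using rho_0 by (intro exI[of _ 1]) auto
    next
      case (step c x y)
      then obtain m n where m: "x = mon m v0" "AL m" and n: "n > 0" "\<forall>g. inB A g \<and> deg g \<ge> n \<longrightarrow> rho g y = 0"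
        by auto
      show ?case
      proof (intro exI[of _ "max n (s + negsum m)"] conjI allI impI)
        fix g assume g: "inB A g \<and> max n (s + negsum m) \<le> deg g"
        then have "rho g x = 0" using kill[OF H m(2)] m(1) by auto
        then show "rho g (sc c x + y) = 0" using n g by (simp add: rho_add rho_scale)
      qed (use n in auto)
    qed
  qed
  show ?thesis
    unfolding condA_def
  proof
    fix v
    obtain n where n: "n > 0" "\<forall>g. inB A g \<and> deg g \<ge> n \<longrightarrow> rho g v = 0" using * by blast
    show "\<exists>n>0. \<forall>i\<ge>n. \<forall>a\<in>comp A i. act sc rho a v = 0"
      by (intro exI[of _ n] conjI allI impI ballI act_zero)
         (use n in \<open>auto simp: comp_def elems_def\<close>)
  qed
qed

lemma A_imp_B:
  assumes simp: "simple_module A sc rho" and Acond: "condA A sc rho"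
  shows "condB A sc rho"
proof -
  obtain v0 :: 'v where v0: "v0 \<noteq> 0" using simp unfolding simple_module_def by auto
  obtain n where n: "n > 0" "\<forall>i\<ge>n. \<forall>a\<in>comp A i. act sc rho a v0 = 0" using Acond unfolding condA_def by blast
  show ?thesis
  proof (rule basis_condB[OF v0, of n])
    fix g assume "inB A g" "deg g \<ge> n"
    then show "rho g v0 = 0" using n(2) bv_comp[of A g] act_bv by metis
  qed (use n in auto)
qed


definition possum :: "gen list \<Rightarrow> int" where "possum m = sum_list (map (\<lambda>g. max 0 (deg g)) m)"

definition G :: "nat \<Rightarrow> int \<Rightarrow> int \<Rightarrow> gen list set" where
  "G R B hi = {m. length m \<le> R \<and> AL m \<and> (\<forall>g\<in>set m. - B \<le> deg g \<and> deg g \<le> hi)}"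

lemma G_mono: "R \<le> R2 \<Longrightarrow> B \<le> B2 \<Longrightarrow> hi \<le> hi2 \<Longrightarrow> G R B hi \<subseteq> G R2 B2 hi2"
  unfolding G_def by force

lemma G_Cons: "y # m \<in> G R B hi \<Longrightarrow> m \<in> G R B hi"
  unfolding G_def by auto

lemma G_finite: "finite (G R B hi)"
proof -
  let ?X = "D ` {-B..hi} \<union> I ` {-B..hi} \<union> {Z1, Z2, Z3}"
  have fX: "finite ?X" by auto
  have "G R B hi \<subseteq> {xs. set xs \<subseteq> ?X \<and> length xs \<le> R}"
  proof
    fix m assume "m \<in> G R B hi"
    then have m: "length m \<le> R" "\<forall>g\<in>set m. - B \<le> deg g \<and> deg g \<le> hi" unfolding G_def by auto
    have "set m \<subseteq> ?X"
    proof
      fix g assume "g \<in> set m"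
      then have "- B \<le> deg g \<and> deg g \<le> hi" using m by auto
      then show "g \<in> ?X" by (cases g) auto
    qed
    then show "m \<in> {xs. set xs \<subseteq> ?X \<and> length xs \<le> R}" using m by auto
  qed
  moreover have "finite {xs. set xs \<subseteq> ?X \<and> length xs \<le> R}" by (rule finite_lists_length_le[OF fX])
  ultimately show ?thesis by (rule finite_subset)
qed

lemma negsum_bound: "B \<ge> 0 \<Longrightarrow> \<forall>g\<in>set m. - B \<le> deg g \<Longrightarrow> negsum m \<le> int (length m) * B"
  by (induct m) (auto simp: algebra_simps)

lemma dsum_lower: "\<forall>g\<in>set m. - B \<le> deg g \<Longrightarrow> dsum m \<ge> - (int (length m) * B)"
  by (induct m) (auto simp: algebra_simps)

lemma dsum_upper: "\<forall>g\<in>set m. deg g \<le> hi \<Longrightarrow> dsum m \<le> int (length m) * hi"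
  by (induct m) (auto simp: algebra_simps)

lemma possum_ge: "g \<in> set m \<Longrightarrow> deg g \<le> possum m"
proof (induct m)
  case (Cons a m)
  have "possum (a # m) = max 0 (deg a) + possum m" by (simp add: possum_def)
  moreover have "possum m \<ge> 0" by (induct m) (auto simp: possum_def)
  ultimately show ?case using Cons by auto
qed simp

lemma negsum_ge: "g \<in> set m \<Longrightarrow> - deg g \<le> negsum m"
proof (induct m)
  case (Cons a m)
  then show ?case using negsum_nonneg[of m] by auto
qed simp

lemma step:
  assumes H: "\<And>g. inB A g \<Longrightarrow> deg g \<ge> s \<Longrightarrow> rho g v0 = 0" and s1: "s \<ge> 1"
    and B0: "B \<ge> 0" and hi: "hi \<ge> s + int R * B"
  shows "m \<in> G R B hi \<Longrightarrow> inB A x \<Longrightarrow> deg x \<ge> s \<Longrightarrow>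
    rho x (mon m v0) \<in> span {mon m' v0 | m'. m' \<in> G R B hi \<and> length m' = length m \<and> dsum m' \<ge> dsum m + 1}"
proof (induct m)
  case Nil then show ?case using H by (simp add: span_zero)
next
  case (Cons y m)
  have mG: "m \<in> G R B hi" using G_Cons[OF Cons.prems(1)] .
  have y: "inB A y" "- B \<le> deg y" "deg y \<le> hi" and lm: "length (y # m) \<le> R" and mAL: "AL m"
    and mb: "\<forall>g\<in>set m. - B \<le> deg g" using Cons.prems(1) unfolding G_def by auto
  let ?S = "span {mon m' v0 | m'. m' \<in> G R B hi \<and> length m' = length (y # m) \<and> dsum m' \<ge> dsum (y # m) + 1}"
  have "rho x (mon (y # m) v0) = rho y (rho x (mon m v0)) + act sc rho (bracket x y) (mon m v0)"
    using comm[OF Cons.prems(2) y(1)] by simp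
  moreover have "rho y (rho x (mon m v0)) \<in> ?S"
  proof (rule rho_span[OF y(1) Cons.hyps[OF mG Cons.prems(2,3)]])
    fix u assume "u \<in> {mon m' v0 | m'. m' \<in> G R B hi \<and> length m' = length m \<and> dsum m' \<ge> dsum m + 1}"
    then obtain m' where m': "u = mon m' v0" "m' \<in> G R B hi" "length m' = length m" "dsum m' \<ge> dsum m + 1"
      by auto
    have yG: "y # m' \<in> G R B hi" using m' y lm unfolding G_def by auto
    have "rho y u = mon (y # m') v0" using m' by simp
    then show "rho y u \<in> ?S" apply (intro span_base) using m' yG by (auto intro!: exI[of _ "y # m'"])
  qed
  moreover have "act sc rho (bracket x y) (mon m v0) \<in> ?S"
  proof (rule act_span)
    fix z assume "bracket x y z \<noteq> 0"
    from bracket_supp[OF Cons.prems(2) y(1) this] have z: "inB A z" "deg z = deg x + deg y" by auto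
    show "rho z (mon m v0) \<in> ?S"
    proof (cases "deg z \<le> hi")
      case True
      then have "z # m \<in> G R B hi" using z y lm mG Cons.prems(3) s1 unfolding G_def by auto
      then show ?thesis using z Cons.prems(3) s1 by (intro span_base) (auto intro!: exI[of _ "z # m"])
    next
      case False
      have "negsum m \<le> int (length m) * B" using negsum_bound[OF B0 mb] .
      also have "\<dots> \<le> int R * B" using lm B0 by (intro mult_right_mono) auto
      finally have "deg z \<ge> s + negsum m" using False hi by auto
      then have "rho z (mon m v0) = 0" using kill[OF H mAL z(1)] by auto
      then show ?thesis by (simp add: span_zero)
    qed
  qed
  ultimately show ?case by (simp add: span_add)
qed

lemma exists_G:
  assumes simp: "simple_module A sc rho" and v0: "v0 \<noteq> 0"
  shows "\<exists>R B hi. B \<ge> 0 \<and> v \<in> span ((\<lambda>m. mon m v0) ` G R B hi)"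
proof -
  have "v \<in> span {mon m v0 | m. AL m}" using mon_span_univ[OF simp v0] by auto
  then show ?thesis
  proof (induct rule: span_induct_alt)
    case base then show ?case by (intro exI[of _ 0]) (auto simp: span_zero)
  next
    case (step c x y)
    then obtain m R B hi where m: "x = mon m v0" "AL m" and y: "B \<ge> 0" "y \<in> span ((\<lambda>m. mon m v0) ` G R B hi)"
      by auto
    let ?R = "max R (length m)" and ?B = "max B (negsum m)" and ?hi = "max hi (possum m)"
    have sub: "span ((\<lambda>m. mon m v0) ` G R B hi) \<subseteq> span ((\<lambda>m. mon m v0) ` G ?R ?B ?hi)"
      by (intro span_mono image_mono G_mono) auto
    have "m \<in> G ?R ?B ?hi" unfolding G_def using m possum_ge negsum_ge by force
    then have "x \<in> span ((\<lambda>m. mon m v0) ` G ?R ?B ?hi)" using m by (intro span_base) auto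
    then show ?case using y sub by (intro exI[of _ ?R] exI[of _ ?B] exI[of _ ?hi]) (auto intro: span_add span_scale)
  qed
qed

lemma B_imp_C:
  assumes simp: "simple_module A sc rho" and B: "condB A sc rho"
  shows "condC A sc rho"
proof -
  obtain v0 s where v0: "v0 \<noteq> 0" "s \<ge> 1" and H: "\<And>g. inB A g \<Longrightarrow> deg g \<ge> s \<Longrightarrow> rho g v0 = 0"
    using condB_basis[OF B] by blast
  show ?thesis
    unfolding condC_def
  proof (intro exI[of _ s] conjI allI)
    show "s \<ge> 1" by fact
    fix v
    obtain R B hi where B0: "B \<ge> 0" and v: "v \<in> span ((\<lambda>m. mon m v0) ` G R B hi)"
      using exists_G[OF simp v0(1)] by blast
    define hi2 where "hi2 = max hi (s + int R * B)"
    have hi2: "hi2 \<ge> s + int R * B" unfolding hi2_def by auto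
    let ?U = "span ((\<lambda>m. mon m v0) ` G R B hi2)"
    have vU: "v \<in> ?U" using span_mono[OF image_mono[OF G_mono[of R R B B hi hi2]]] v by (auto simp: hi2_def)
    show "\<exists>U. subspace U \<and> (\<exists>B. finite B \<and> U = span B) \<and> v \<in> U \<and> (\<forall>a\<in>upper A s. \<forall>u\<in>U. act sc rho a u \<in> U)"
    proof -
     have fin: "finite ((\<lambda>m. mon m v0) ` G R B hi2)" using G_finite by blast
     have "\<forall>a\<in>upper A s. \<forall>u\<in>?U. act sc rho a u \<in> ?U"
     proof (intro ballI)
      fix a u assume a: "a \<in> upper A s" and u: "u \<in> ?U"
      show "act sc rho a u \<in> ?U"
      proof (rule act_span)
        fix g assume "a g \<noteq> 0"
        then have g: "inB A g" "deg g \<ge> s" using a unfolding upper_def elems_def by auto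
        show "rho g u \<in> ?U"
        proof (rule rho_span[OF g(1) u])
          fix x assume "x \<in> (\<lambda>m. mon m v0) ` G R B hi2"
          then obtain m where m: "x = mon m v0" "m \<in> G R B hi2" by auto
          have "rho g x \<in> span {mon m' v0 | m'. m' \<in> G R B hi2 \<and> length m' = length m \<and> dsum m' \<ge> dsum m + 1}"
            using step[OF H v0(2) B0 hi2 m(2) g] m by simp
          also have "\<dots> \<subseteq> ?U" by (intro span_mono) auto
          finally show "rho g x \<in> ?U" .
        qed
      qed
     qed
     then show ?thesis using fin vU subspace_span by blast
    qed
  qed
qed

lemma B_imp_D:
  assumes simp: "simple_module A sc rho" and B: "condB A sc rho"
  shows "condD A sc rho"
proof -
  obtain v0 s where v0: "v0 \<noteq> 0" "s \<ge> 1" and H: "\<And>g. inB A g \<Longrightarrow> deg g \<ge> s \<Longrightarrow> rho g v0 = 0"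
    using condB_basis[OF B] by blast
  show ?thesis
    unfolding condD_def
  proof (intro exI[of _ s] conjI allI)
    show "s \<ge> 1" by fact
    fix v
    obtain R B hi where B0: "B \<ge> 0" and v: "v \<in> span ((\<lambda>m. mon m v0) ` G R B hi)"
      using exists_G[OF simp v0(1)] by blast
    define hi2 where "hi2 = max hi (s + int R * B)"
    have hi2: "hi2 \<ge> s + int R * B" unfolding hi2_def by auto
    define M where "M d = span ((\<lambda>m. mon m v0) ` {m \<in> G R B hi2. dsum m \<ge> d})" for d
    have Mstep: "act sc rho a u \<in> M (d + 1)" if a: "a \<in> upper A s" and u: "u \<in> M d" for a u d
      unfolding M_def
    proof (rule act_span)
      fix g assume "a g \<noteq> 0"
      then have g: "inB A g" "deg g \<ge> s" using a unfolding upper_def elems_def by auto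
      show "rho g u \<in> span ((\<lambda>m. mon m v0) ` {m \<in> G R B hi2. dsum m \<ge> d + 1})"
      proof (rule rho_span[OF g(1) u[unfolded M_def]])
        fix x assume "x \<in> (\<lambda>m. mon m v0) ` {m \<in> G R B hi2. dsum m \<ge> d}"
        then obtain m where m: "x = mon m v0" "m \<in> G R B hi2" "dsum m \<ge> d" by auto
        have "rho g x \<in> span {mon m' v0 | m'. m' \<in> G R B hi2 \<and> length m' = length m \<and> dsum m' \<ge> dsum m + 1}"
          using step[OF H v0(2) B0 hi2 m(2) g] m by simp
        also have "\<dots> \<subseteq> span ((\<lambda>m. mon m v0) ` {m \<in> G R B hi2. dsum m \<ge> d + 1})" using m(3) by (intro span_mono) auto
        finally show "rho g x \<in> span ((\<lambda>m. mon m v0) ` {m \<in> G R B hi2. dsum m \<ge> d + 1})" .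
      qed
    qed
    have Mfold: "foldr (\<lambda>a w. act sc rho a w) as u \<in> M (d + int (length as))"
      if "u \<in> M d" "set as \<subseteq> upper A s" for as u d
      using that
    proof (induct as)
      case Nil then show ?case by simp
    next
      case (Cons a as)
      then have "foldr (\<lambda>a w. act sc rho a w) as u \<in> M (d + int (length as))" by auto
      then have "act sc rho a (foldr (\<lambda>a w. act sc rho a w) as u) \<in> M (d + int (length as) + 1)"
        using Cons.prems by (intro Mstep) auto
      then show ?case by (simp add: algebra_simps)
    qed
    have vM: "v \<in> M (- (int R * B))"
      unfolding M_def
    proof (rule subsetD[OF span_mono v], rule image_mono, rule subsetI)
      fix m assume m: "m \<in> G R B hi"
      then have mG: "m \<in> G R B hi2" using G_mono[of R R B B hi hi2] by (auto simp: hi2_def)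
      have "dsum m \<ge> - (int (length m) * B)" using m by (intro dsum_lower) (auto simp: G_def)
      moreover have "int (length m) * B \<le> int R * B" using m B0 by (intro mult_right_mono) (auto simp: G_def)
      ultimately show "m \<in> {m \<in> G R B hi2. dsum m \<ge> - (int R * B)}" using mG by auto
    qed
    define n where "n = nat (int R * hi2 + int R * B + 1)"
    have RB1: "int R * B \<ge> 0" using B0 by auto
    then have hi20: "hi2 \<ge> 0" using hi2 v0(2) by auto
    then have RB: "int R * B \<ge> 0" "int R * hi2 \<ge> 0" using RB1 by auto
    have Mtop: "M (int R * hi2 + 1) = {0}"
    proof -
      have "{m \<in> G R B hi2. dsum m \<ge> int R * hi2 + 1} = {}"
      proof (rule ccontr)
        assume "\<not> ?thesis"
        then obtain m where m: "m \<in> G R B hi2" "dsum m \<ge> int R * hi2 + 1" by auto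
        have "dsum m \<le> int (length m) * hi2" using m by (intro dsum_upper) (auto simp: G_def)
        moreover have "int (length m) * hi2 \<le> int R * hi2" using m hi20
          by (intro mult_right_mono) (auto simp: G_def)
        ultimately show False using m by auto
      qed
      then show ?thesis unfolding M_def by (metis image_empty span_empty)
    qed
    show "\<exists>n\<ge>1. \<forall>as. length as = n \<and> set as \<subseteq> upper A s \<longrightarrow> foldr (\<lambda>a w. act sc rho a w) as v = 0"
    proof (intro exI[of _ n] conjI allI impI)
      show "n \<ge> 1" unfolding n_def using RB by auto
      fix as assume as: "length as = n \<and> set as \<subseteq> upper A s"
      have "foldr (\<lambda>a w. act sc rho a w) as v \<in> M (- (int R * B) + int (length as))"
        using Mfold[OF vM] as by auto
      also have "- (int R * B) + int (length as) = int R * hi2 + 1" using as RB unfolding n_def by auto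
      finally show "foldr (\<lambda>a w. act sc rho a w) as v = 0" using Mtop by auto
    qed
  qed
qed

lemma D_imp_B:
  assumes simp: "simple_module A sc rho" and Dc: "condD A sc rho"
  shows "condB A sc rho"
proof -
  obtain v0 :: 'v where v0: "v0 \<noteq> 0" using simp unfolding simple_module_def by auto
  obtain m n where m: "m \<ge> 1" and n: "\<forall>as. length as = n \<and> set as \<subseteq> upper A m \<longrightarrow> foldr (\<lambda>a w. act sc rho a w) as v0 = 0"
    using Dc unfolding condD_def by blast
  define P where "P k \<longleftrightarrow> (\<forall>as. length as = k \<and> set as \<subseteq> upper A m \<longrightarrow> foldr (\<lambda>a w. act sc rho a w) as v0 = 0)" for k
  have Pn: "P n" using n unfolding P_def by auto
  define k where "k = (LEAST k. P k)"
  have Pk: "P k" unfolding k_def using Pn by (rule LeastI)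
  have "\<not> P 0" unfolding P_def using v0 by auto
  then have k0: "k > 0" using Pk by (cases k) auto
  have "\<not> P (k - 1)" using k0 unfolding k_def by (metis Least_le diff_less less_one not_le k_def)
  then obtain as where as: "length as = k - 1" "set as \<subseteq> upper A m" "foldr (\<lambda>a w. act sc rho a w) as v0 \<noteq> 0"
    unfolding P_def by auto
  show ?thesis
    unfolding condB_def
  proof (intro exI[of _ "foldr (\<lambda>a w. act sc rho a w) as v0"] exI[of _ m] conjI ballI)
    fix a assume "a \<in> upper A m"
    then have "length (a # as) = k" "set (a # as) \<subseteq> upper A m" using as k0 by auto
    then have "foldr (\<lambda>a w. act sc rho a w) (a # as) v0 = 0" using Pk unfolding P_def by blast
    then show "act sc rho a (foldr (\<lambda>a w. act sc rho a w) as v0) = 0" by simp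
  qed (use as m in auto)
qed

end


lemma PL:
  fixes J :: "complex poly set" and c :: nat
  assumes c: "c \<ge> 1"
    and add: "\<And>P Q. P \<in> J \<Longrightarrow> Q \<in> J \<Longrightarrow> P + Q \<in> J"
    and mul: "\<And>P R. P \<in> J \<Longrightarrow> P * R \<in> J"
    and der: "\<And>P. P \<in> J \<Longrightarrow> monom 1 c * pderiv P \<in> J"
    and P0: "P0 \<in> J" "P0 \<noteq> 0"
  shows "\<exists>M. monom 1 M \<in> J"
proof -
  have main: "\<And>R e. degree R = n \<Longrightarrow> R \<noteq> 0 \<Longrightarrow> monom 1 e * R \<in> J \<Longrightarrow> \<exists>M. monom 1 M \<in> J" for n
  proof (induct n rule: less_induct)
    case (less n R e)
    show ?case
    proof (cases "degree R = 0")
      case True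
      then obtain r where R: "R = [:r:]" by (metis degree_eq_zeroE)
      then have r: "r \<noteq> 0" using less.prems by auto
      have "monom 1 e * R * [:1/r:] \<in> J" using mul less.prems by blast
      also have "monom 1 e * R * [:1/r:] = monom 1 e" using r R by (simp add: mult.assoc)
      finally show ?thesis by blast
    next
      case False
      let ?P = "monom 1 e * R"
      have Q: "monom 1 c * pderiv ?P \<in> J" using der less.prems by blast
      have eq: "monom 1 c * pderiv ?P = monom 1 (c + e) * pderiv R + ?P * monom (of_nat e) (c - 1)"
      proof -
        have "pderiv ?P = monom 1 e * pderiv R + R * monom (of_nat e) (e - 1)"
          by (simp add: pderiv_mult pderiv_monom)
        moreover have "monom 1 c * (R * monom (of_nat e) (e - 1)) = ?P * monom (of_nat e) (c - 1)"
        proof (cases e)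
          case 0 then show ?thesis by simp
        next
          case (Suc e')
          then show ?thesis using c by (simp add: mult_monom algebra_simps)
        qed
        ultimately show ?thesis by (simp add: algebra_simps mult_monom)
      qed
      have "monom 1 c * pderiv ?P + ?P * monom (of_nat e) (c - 1) * [:-1:] \<in> J"
        using add[OF Q mul[OF mul[OF less.prems(3)]]] by blast
      also have "monom 1 c * pderiv ?P + ?P * monom (of_nat e) (c - 1) * [:-1:] = monom 1 (c + e) * pderiv R"
        unfolding eq by (simp add: algebra_simps)
      finally have J1: "monom 1 (c + e) * pderiv R \<in> J" .
      have "pderiv R \<noteq> 0" using False by (simp add: pderiv_eq_0_iff)
      moreover have "degree (pderiv R) = degree R - 1" by (rule degree_pderiv)
      then have "degree (pderiv R) < n" using False less.prems by linarith
      ultimately show ?thesis using less.hyps J1 by blast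
    qed
  qed
  show ?thesis using main[of P0 "degree P0" 0] P0 by simp
qed

lemma sum_fun_apply': "finite II \<Longrightarrow> (\<Sum>i\<in>II. f i) x = (\<Sum>i\<in>II. f i x)"
  by (induct II rule: finite_induct) auto

lemma sum_fun_apply: "(\<Sum>i\<in>II. f i) x = (\<Sum>i\<in>II. f i x)"
  by (cases "finite II") (auto simp: sum_fun_apply')

lemma FD:
  fixes sc :: "complex \<Rightarrow> 'v::ab_group_add \<Rightarrow> 'v" and T :: "nat \<Rightarrow> 'v \<Rightarrow> 'v"
  assumes vs: "vector_space sc" and fB: "finite B" and TB: "\<And>j b. b \<in> B \<Longrightarrow> T j b \<in> module.span sc B"
  shows "\<exists>N c. (\<exists>j\<le>N. c j \<noteq> 0) \<and> (\<forall>b\<in>B. (\<Sum>j\<le>N. sc (c j) (T j b)) = 0)"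
proof -
  interpret V: vector_space sc by (rule vs)
  define fs :: "complex \<Rightarrow> ('v \<Rightarrow> 'v) \<Rightarrow> ('v \<Rightarrow> 'v)" where "fs c f = (\<lambda>x. sc c (f x))" for c f
  interpret F: vector_space fs
    by unfold_locales (auto simp: fs_def fun_eq_iff V.scale_right_distrib V.scale_left_distrib)
  define e where "e (b::'v) u = (\<lambda>x. if x = b then u else (0::'v))" for b u
  define E where "E = (\<lambda>(b, u). e b u) ` (B \<times> B)"
  have fE: "finite E" unfolding E_def using fB by auto
  have cE: "card E \<le> card B * card B"
    unfolding E_def using card_image_le[of "B \<times> B" "\<lambda>(b, u). e b u"] fB by (simp add: card_cartesian_product)
  have espan: "e b u \<in> F.span E" if "b \<in> B" "u \<in> V.span B" for b u
    using that(2)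
  proof (induct rule: V.span_induct_alt)
    case base
    have "e b 0 = 0" by (auto simp: e_def fun_eq_iff)
    then show ?case by (metis F.span_zero)
  next
    case (step c x y)
    have "e b (sc c x + y) = fs c (e b x) + e b y" by (auto simp: e_def fs_def fun_eq_iff)
    moreover have "e b x \<in> E" using step that unfolding E_def by auto
    ultimately show ?case using step by (metis F.span_add F.span_scale F.span_base)
  qed
  define Fj where "Fj j = (\<lambda>x. if x \<in> B then T j x else 0)" for j
  have Fspan: "Fj j \<in> F.span E" for j
  proof -
    have "S \<subseteq> B \<Longrightarrow> (\<lambda>x. if x \<in> S then T j x else 0) \<in> F.span E" for S
    proof (induct S rule: infinite_finite_induct)
      case (infinite S) then show ?case using fB finite_subset by blast
    next
      case empty
      have eq: "(\<lambda>x. if x \<in> {} then T j x else 0) = (0 :: 'v \<Rightarrow> 'v)" by (rule ext) simp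
      show ?case unfolding eq by (rule F.span_zero)
    next
      case (insert x S)
      have eq: "(\<lambda>y. if y \<in> insert x S then T j y else 0) = e x (T j x) + (\<lambda>y. if y \<in> S then T j y else 0)"
        using insert.hyps unfolding e_def plus_fun_def by (intro ext) auto
      have xB: "x \<in> B" using insert.prems by auto
      have 1: "e x (T j x) \<in> F.span E" by (rule espan[OF xB TB[OF xB]])
      have 2: "(\<lambda>y. if y \<in> S then T j y else 0) \<in> F.span E" using insert.prems by (intro insert.hyps) auto
      show ?case unfolding eq by (rule F.span_add[OF 1 2])
    qed
    from this[of B] show ?thesis unfolding Fj_def by simp
  qed
  define N where "N = card B * card B"
  show ?thesis
  proof (cases "inj_on Fj {..N}")
    case True
    let ?S = "Fj ` {..N}"
    have cS: "card ?S = N + 1" using True by (simp add: card_image)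
    have "\<not> F.independent ?S"
    proof
      assume "F.independent ?S"
      then have "card ?S \<le> card E" using F.independent_span_bound[OF fE] Fspan by auto
      then show False using cS cE unfolding N_def by auto
    qed
    then obtain u where u: "\<exists>v\<in>?S. u v \<noteq> 0" "(\<Sum>v\<in>?S. fs (u v) v) = 0"
      using F.dependent_finite[of ?S] by auto
    define c where "c j = u (Fj j)" for j
    have "(\<Sum>j\<le>N. fs (c j) (Fj j)) = (\<Sum>v\<in>?S. fs (u v) v)"
      unfolding c_def using sum.reindex[OF True, of "\<lambda>v. fs (u v) v"] by simp
    then have z: "(\<Sum>j\<le>N. fs (c j) (Fj j)) = 0" using u(2) by simp
    show ?thesis
    proof (rule exI[of _ N], rule exI[of _ c], intro conjI ballI)
      show "\<exists>j\<le>N. c j \<noteq> 0" using u(1) unfolding c_def by auto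
      fix b assume b: "b \<in> B"
      have "(\<Sum>j\<le>N. fs (c j) (Fj j)) b = 0" using z by simp
      then show "(\<Sum>j\<le>N. sc (c j) (T j b)) = 0" using b by (simp add: sum_fun_apply fs_def Fj_def)
    qed
  next
    case False
    then obtain i j where ij: "i \<le> N" "j \<le> N" "i \<noteq> j" "Fj i = Fj j" unfolding inj_on_def by auto
    define c where "c l = (if l = i then 1 else if l = j then -1 else (0::complex))" for l
    show ?thesis
    proof (rule exI[of _ N], rule exI[of _ c], intro conjI ballI)
      show "\<exists>j\<le>N. c j \<noteq> 0" using ij unfolding c_def by (intro exI[of _ i]) auto
      fix b assume b: "b \<in> B"
      have Tij: "T i b = T j b" using ij(4) b unfolding Fj_def by (metis (mono_tags))
      have "sc (c l) (T l b) = (if l = i then T l b else 0) - (if l = j then T l b else 0)" for l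
        using ij(3) by (auto simp: c_def)
      then have "(\<Sum>l\<le>N. sc (c l) (T l b)) = (\<Sum>l\<le>N. (if l = i then T l b else 0)) - (\<Sum>l\<le>N. (if l = j then T l b else 0))"
        by (simp add: sum_subtractf)
      also have "\<dots> = T i b - T j b" using ij by simp
      finally show "(\<Sum>l\<le>N. sc (c l) (T l b)) = 0" using Tij by simp
    qed
  qed
qed

definition low :: "nat \<Rightarrow> 'a::zero poly \<Rightarrow> bool" where "low n p \<longleftrightarrow> (\<forall>j<n. coeff p j = 0)"

lemma low_mono: "b \<le> a \<Longrightarrow> low a p \<Longrightarrow> low b p"
  unfolding low_def by auto

lemma low_add: "low n p \<Longrightarrow> low n q \<Longrightarrow> low n (p + q)"
  unfolding low_def by auto

lemma low_diff: "low n p \<Longrightarrow> low n (q::'a::ab_group_add poly) \<Longrightarrow> low n (p - q)"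
  unfolding low_def by auto

lemma low_smult: "low n p \<Longrightarrow> low n (smult c p)"
  unfolding low_def by auto

lemma low_monom: "n \<le> m \<Longrightarrow> low n (monom c m)"
  unfolding low_def by auto

lemma low_mult: "low a p \<Longrightarrow> low b q \<Longrightarrow> low (a + b) (p * (q::'a::comm_semiring_0 poly))"
  unfolding low_def coeff_mult
proof (intro allI impI sum.neutral ballI)
  fix j i assume h: "\<forall>j<a. coeff p j = 0" "\<forall>j<b. coeff q j = 0" "j < a + b" "i \<in> {..j}"
  show "coeff p i * coeff q (j - i) = 0"
  proof (cases "i < a")
    case True then show ?thesis using h by simp
  next
    case False then have "j - i < b" using h by auto
    then show ?thesis using h by simp
  qed
qed

lemma low_pderiv: "low (Suc a) p \<Longrightarrow> low a (pderiv p)"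
  unfolding low_def by (auto simp: coeff_pderiv)

lemma low_sum: "(\<And>i. i \<in> F \<Longrightarrow> low n (f i)) \<Longrightarrow> low n (\<Sum>i\<in>F. f i)"
  unfolding low_def by (auto simp: coeff_sum intro!: sum.neutral)

lemma add_hom_sum:
  fixes \<Phi> :: "'a::comm_monoid_add \<Rightarrow> 'b::ab_group_add"
  assumes add: "\<And>x y. \<Phi> (x + y) = \<Phi> x + \<Phi> y"
  shows "\<Phi> (\<Sum>i\<in>F. f i) = (\<Sum>i\<in>F. \<Phi> (f i))"
proof -
  have z: "\<Phi> 0 = 0" using add[of 0 0] by simp
  show ?thesis by (induct F rule: infinite_finite_induct) (auto simp: z add)
qed

lemma monom_expand: "low n0 q \<Longrightarrow> q = (\<Sum>i\<in>{i. i \<le> degree q \<and> n0 \<le> i}. monom (coeff q i) i)"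
proof -
  assume l: "low n0 q"
  have "q = (\<Sum>i\<le>degree q. monom (coeff q i) i)" by (simp add: poly_as_sum_of_monoms)
  also have "\<dots> = (\<Sum>i\<in>{i. i \<le> degree q \<and> n0 \<le> i}. monom (coeff q i) i)"
    using l unfolding low_def by (intro sum.mono_neutral_right) (auto simp: not_le[symmetric])
  finally show ?thesis .
qed

lemma bilin_ext:
  fixes \<Phi> :: "'a::comm_ring_1 poly \<Rightarrow> 'a poly \<Rightarrow> 'b::ab_group_add"
  assumes addL: "\<And>q1 q2 p. \<Phi> (q1 + q2) p = \<Phi> q1 p + \<Phi> q2 p"
    and addR: "\<And>q p1 p2. \<Phi> q (p1 + p2) = \<Phi> q p1 + \<Phi> q p2"
    and mono: "\<And>a b n m. n \<ge> n0 \<Longrightarrow> m \<ge> m0 \<Longrightarrow> \<Phi> (monom b n) (monom a m) = 0"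
    and lq: "low n0 q" and lp: "low m0 p"
  shows "\<Phi> q p = 0"
proof -
  have 1: "\<Phi> (monom b n) p = 0" if "n \<ge> n0" for b n
  proof -
    have "\<Phi> (monom b n) p = \<Phi> (monom b n) (\<Sum>i\<in>{i. i \<le> degree p \<and> m0 \<le> i}. monom (coeff p i) i)"
      using monom_expand[OF lp] by simp
    also have "\<dots> = (\<Sum>i\<in>{i. i \<le> degree p \<and> m0 \<le> i}. \<Phi> (monom b n) (monom (coeff p i) i))"
      by (rule add_hom_sum) (rule addR)
    also have "\<dots> = 0" using that by (intro sum.neutral) (auto intro: mono)
    finally show ?thesis .
  qed
  have "\<Phi> q p = \<Phi> (\<Sum>i\<in>{i. i \<le> degree q \<and> n0 \<le> i}. monom (coeff q i) i) p"
    using monom_expand[OF lq] by simp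
  also have "\<dots> = (\<Sum>i\<in>{i. i \<le> degree q \<and> n0 \<le> i}. \<Phi> (monom (coeff q i) i) p)"
    by (rule add_hom_sum[where \<Phi> = "\<lambda>x. \<Phi> x p"]) (rule addL)
  also have "\<dots> = 0" by (intro sum.neutral) (auto intro: 1)
  finally show ?thesis .
qed


context hm
begin

definition actF :: "(nat \<Rightarrow> gen) \<Rightarrow> complex poly \<Rightarrow> 'v \<Rightarrow> 'v" where
  "actF f p u = (\<Sum>j\<le>degree p. sc (coeff p j) (rho (f j) u))"

lemma actF_N: "degree p \<le> N \<Longrightarrow> actF f p u = (\<Sum>j\<le>N. sc (coeff p j) (rho (f j) u))"
  unfolding actF_def by (intro sum.mono_neutral_left) (auto simp: coeff_eq_0)

lemma actF_add: "actF f (p + q) u = actF f p u + actF f q u"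
proof -
  let ?N = "max (degree p) (degree q)"
  have "degree (p + q) \<le> ?N" by (intro degree_add_le) auto
  then show ?thesis
    by (simp add: actF_N[of _ ?N] actF_N[of p ?N] actF_N[of q ?N] scale_left_distrib sum.distrib)
qed

lemma actF_smult: "actF f (smult c p) u = sc c (actF f p u)"
  by (simp add: actF_N[of "smult c p" "degree p", OF degree_smult_le] actF_def scale_sum_right)

lemma actF_0: "actF f 0 u = 0"
  by (simp add: actF_def)

lemma actF_diff: "actF f (p - q) u = actF f p u - actF f q u"
proof -
  have e: "p - q = p + smult (-1) q" by simp
  have "actF f (smult (-1) q) u = sc (-1) (actF f q u)" by (rule actF_smult)
  then have m: "actF f (smult (-1) q) u = - actF f q u" by simp
  show ?thesis unfolding e actF_add m by simp
qed

lemma actF_monom: "actF f (monom a n) u = sc a (rho (f n) u)"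
proof -
  have "actF f (monom a n) u = (\<Sum>j\<le>n. sc (coeff (monom a n) j) (rho (f j) u))"
    by (rule actF_N) (simp add: degree_monom_le)
  also have "\<dots> = (\<Sum>j\<le>n. if j = n then sc a (rho (f n) u) else 0)"
    by (intro sum.cong) auto
  finally show ?thesis by simp
qed

context
  fixes f :: "nat \<Rightarrow> gen"
  assumes fA: "\<And>j. inB A (f j)"
begin

lemma actF_uadd: "actF f p (x + y) = actF f p x + actF f p y"
  unfolding actF_def by (simp add: rho_add[OF fA] scale_right_distrib sum.distrib)

lemma actF_uscale: "actF f p (sc c x) = sc c (actF f p x)"
  unfolding actF_def by (simp add: rho_scale[OF fA] scale_sum_right mult.commute)

lemma actF_u0: "actF f p 0 = 0"
  unfolding actF_def by (simp add: rho_0[OF fA])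

lemma actF_udiff: "actF f p (x - y) = actF f p x - actF f p y"
  unfolding actF_def by (simp add: rho_diff[OF fA] scale_right_diff_distrib sum_subtractf)

lemma actF_span0: "(\<And>b. b \<in> Bs \<Longrightarrow> actF f p b = 0) \<Longrightarrow> u \<in> span Bs \<Longrightarrow> actF f p u = 0"
proof -
  assume h: "\<And>b. b \<in> Bs \<Longrightarrow> actF f p b = 0" and u: "u \<in> span Bs"
  from u show ?thesis
    by (induct rule: span_induct_alt) (auto simp: actF_u0 actF_uadd actF_uscale h)
qed

end

lemma actF_stab: "subspace U \<Longrightarrow> (\<And>j. coeff p j \<noteq> 0 \<Longrightarrow> rho (f j) u \<in> U) \<Longrightarrow> actF f p u \<in> U"
proof -
  assume U: "subspace U" and h: "\<And>j. coeff p j \<noteq> 0 \<Longrightarrow> rho (f j) u \<in> U"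
  have "sc (coeff p j) (rho (f j) u) \<in> U" for j
    using h[of j] U by (cases "coeff p j = 0") (auto intro: subspace_scale simp: subspace_0)
  then show ?thesis unfolding actF_def by (intro subspace_sum[OF U]) auto
qed


abbreviation "fD \<equiv> (\<lambda>j::nat. D (int j - 1))"
abbreviation "fI \<equiv> (\<lambda>j::nat. I (int j))"

lemma fD_in: "inB A (fD j)" by (rule inB_D) auto

lemma add_diff_add': "(a::'a::ab_group_add) + c - (b + d) = (a - b) + (c - d)"
  by (simp add: algebra_simps)

lemma monom_diff': "monom x k - monom y k = monom (x - y) k"
  by (rule poly_eqI) simp

lemma brD_monom:
  assumes n: "n \<ge> 2" and m: "m \<ge> 2"
  shows "actF fD (monom b n * pderiv (monom a m) - pderiv (monom b n) * monom a m) u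
    = actF fD (monom b n) (actF fD (monom a m) u) - actF fD (monom a m) (actF fD (monom b n) u)"
proof -
  have e1: "monom b n * pderiv (monom a m) - pderiv (monom b n) * monom a m
      = monom (a * b * (of_nat m - of_nat n)) (n + m - 1)"
  proof -
    have "monom b n * pderiv (monom a m) = monom (b * (of_nat m * a)) (n + m - 1)"
      using m by (simp add: pderiv_monom mult_monom)
    moreover have "pderiv (monom b n) * monom a m = monom (of_nat n * b * a) (n + m - 1)"
      using n by (simp add: pderiv_monom mult_monom)
    ultimately show ?thesis by (simp add: monom_diff' algebra_simps)
  qed
  let ?n = "int n - 1" and ?m = "int m - 1"
  have br: "rho (D ?n) (rho (D ?m) u) - rho (D ?m) (rho (D ?n) u) = sc (of_int (?m - ?n)) (rho (D (?m + ?n)) u)"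
    using comm[OF inB_D inB_D, of ?n ?m u] bracket_DD[of ?n ?m u] n m by simp
  have idx: "int (n + m - 1) - 1 = ?m + ?n" using n m by simp
  have co: "(of_int (?m - ?n) :: complex) = of_nat m - of_nat n" by simp
  have "actF fD (monom b n) (actF fD (monom a m) u) - actF fD (monom a m) (actF fD (monom b n) u)
      = sc (a * b) (rho (D ?n) (rho (D ?m) u) - rho (D ?m) (rho (D ?n) u))"
    by (simp add: actF_monom rho_scale[OF inB_D] scale_right_diff_distrib mult.commute)
  also have "\<dots> = sc (a * b * (of_nat m - of_nat n)) (rho (D (?m + ?n)) u)"
    unfolding br co by simp
  finally show ?thesis unfolding e1 actF_monom idx by simp
qed

lemma brD:
  assumes "low 2 q" "low 2 p"
  shows "actF fD (q * pderiv p - pderiv q * p) u = actF fD q (actF fD p u) - actF fD p (actF fD q u)"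
proof -
  define \<Phi> where "\<Phi> q p = actF fD (q * pderiv p - pderiv q * p) u - (actF fD q (actF fD p u) - actF fD p (actF fD q u))" for q p
  have "\<Phi> q p = 0"
  proof (rule bilin_ext[of \<Phi> 2 2])
    fix q1 q2 p :: "complex poly"
    have "(q1 + q2) * pderiv p - pderiv (q1 + q2) * p = (q1 * pderiv p - pderiv q1 * p) + (q2 * pderiv p - pderiv q2 * p)"
      unfolding pderiv_add distrib_left distrib_right by (rule add_diff_add')
    then show "\<Phi> (q1 + q2) p = \<Phi> q1 p + \<Phi> q2 p"
      unfolding \<Phi>_def by (simp add: actF_add actF_uadd[OF fD_in])
  next
    fix q p1 p2 :: "complex poly"
    have "q * pderiv (p1 + p2) - pderiv q * (p1 + p2) = (q * pderiv p1 - pderiv q * p1) + (q * pderiv p2 - pderiv q * p2)"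
      unfolding pderiv_add distrib_left distrib_right by (rule add_diff_add')
    then show "\<Phi> q (p1 + p2) = \<Phi> q p1 + \<Phi> q p2"
      unfolding \<Phi>_def by (simp add: actF_add actF_uadd[OF fD_in])
  next
    fix a b n m :: nat
    show "2 \<le> n \<Longrightarrow> 2 \<le> m \<Longrightarrow> \<Phi> (monom b n) (monom a m) = 0" for a b
      unfolding \<Phi>_def using brD_monom by simp
  qed (use assms in auto)
  then show ?thesis unfolding \<Phi>_def by simp
qed


context
  assumes IA: "\<And>j. j \<ge> 0 \<Longrightarrow> inB A (I j)"
begin

lemma fI_in: "inB A (fI j)" by (rule IA) simp

lemma brI_monom:
  assumes n: "n \<ge> 2" and m: "m \<ge> 1"
  shows "actF fI (monom b n * pderiv (monom a m)) u
    = actF fD (monom b n) (actF fI (monom a m) u) - actF fI (monom a m) (actF fD (monom b n) u)"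
proof -
  have e1: "monom b n * pderiv (monom a m) = monom (a * b * of_nat m) (n + m - 1)"
    using m by (simp add: pderiv_monom mult_monom algebra_simps)
  let ?n = "int n - 1" and ?m = "int m"
  have Im: "inB A (I ?m)" by (rule IA) simp
  have br: "rho (D ?n) (rho (I ?m) u) - rho (I ?m) (rho (D ?n) u) = sc (of_int ?m) (rho (I (?m + ?n)) u)"
    using comm[OF inB_D Im, of ?n u] bracket_DI[of ?n ?m u] n m by simp
  have idx: "int (n + m - 1) = ?m + ?n" using n m by simp
  have "actF fD (monom b n) (actF fI (monom a m) u) - actF fI (monom a m) (actF fD (monom b n) u)
      = sc (a * b) (rho (D ?n) (rho (I ?m) u) - rho (I ?m) (rho (D ?n) u))"
    by (simp add: actF_monom rho_scale[OF inB_D] rho_scale[OF Im] scale_right_diff_distrib mult.commute)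
  also have "\<dots> = sc (a * b * of_nat m) (rho (I (?m + ?n)) u)"
    unfolding br by simp
  finally show ?thesis unfolding e1 actF_monom idx by simp
qed

lemma brI:
  assumes "low 2 f" "low 1 g"
  shows "actF fI (f * pderiv g) u = actF fD f (actF fI g u) - actF fI g (actF fD f u)"
proof -
  define \<Phi> where "\<Phi> f g = actF fI (f * pderiv g) u - (actF fD f (actF fI g u) - actF fI g (actF fD f u))" for f g
  have "\<Phi> f g = 0"
  proof (rule bilin_ext[of \<Phi> 2 1])
    fix q1 q2 p :: "complex poly"
    have "(q1 + q2) * pderiv p = q1 * pderiv p + q2 * pderiv p"
      by (simp add: distrib_right)
    then show "\<Phi> (q1 + q2) p = \<Phi> q1 p + \<Phi> q2 p"
      unfolding \<Phi>_def by (simp add: actF_add actF_uadd[OF fD_in] actF_uadd[OF fI_in])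
  next
    fix q p1 p2 :: "complex poly"
    have "q * pderiv (p1 + p2) = q * pderiv p1 + q * pderiv p2"
      by (simp add: pderiv_add distrib_left)
    then show "\<Phi> q (p1 + p2) = \<Phi> q p1 + \<Phi> q p2"
      unfolding \<Phi>_def by (simp add: actF_add actF_uadd[OF fD_in] actF_uadd[OF fI_in])
  next
    fix a b n m :: nat
    show "2 \<le> n \<Longrightarrow> 1 \<le> m \<Longrightarrow> \<Phi> (monom b n) (monom a m) = 0" for a b
      unfolding \<Phi>_def using brI_monom by simp
  qed (use assms in auto)
  then show ?thesis unfolding \<Phi>_def by simp
qed

end

end


context hm
begin

lemma vs: "vector_space sc" using ism unfolding is_module_def by auto

lemma C_D_kill:
  fixes U Bs and k :: int
  assumes k: "k \<ge> 1" and fB: "finite Bs" and U: "U = span Bs"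
    and stab: "\<And>g u. inB A g \<Longrightarrow> deg g \<ge> k \<Longrightarrow> u \<in> U \<Longrightarrow> rho g u \<in> U"
  shows "\<exists>N. \<forall>i\<ge>N. \<forall>u\<in>U. rho (D i) u = 0"
proof -
  define kn where "kn = nat k"
  have kn: "kn \<ge> 1" "int kn = k" using k unfolding kn_def by auto
  define K where "K p \<longleftrightarrow> low (kn + 1) p \<and> (\<forall>u\<in>U. actF fD p u = 0)" for p
  have Kadd: "K (p + q)" if "K p" "K q" for p q
    using that unfolding K_def by (auto simp: low_add actF_add)
  have Ksmult: "K (smult c p)" if "K p" for p c
    using that unfolding K_def by (auto simp: low_smult actF_smult)
  have Kdiff: "K (p - q)" if "K p" "K q" for p q
    using that unfolding K_def by (auto simp: low_diff actF_diff)
  have K0: "K 0" unfolding K_def by (auto simp: low_def actF_0)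
  have Ksum: "K (\<Sum>i\<in>F. f i)" if "\<And>i. i \<in> F \<Longrightarrow> K (f i)" for F and f :: "nat \<Rightarrow> complex poly"
    using that by (induct F rule: infinite_finite_induct) (auto simp: K0 Kadd)
  have subU: "subspace U" unfolding U by simp
  have stabF: "actF fD q u \<in> U" if "low (kn + 1) q" "u \<in> U" for q u
  proof (rule actF_stab[OF subU])
    fix j assume "coeff q j \<noteq> 0"
    then have "j \<ge> kn + 1" using that(1) unfolding low_def by (meson not_le)
    then have "deg (fD j) \<ge> k" using kn by auto
    then show "rho (fD j) u \<in> U" using stab[OF fD_in _ that(2)] by auto
  qed
  have Kbr: "K (q * pderiv p - pderiv q * p)" if Kp: "K p" and lq: "low (kn + 1) q" for p q
  proof -
    have lp: "low (kn + 1) p" using Kp unfolding K_def by auto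
    have lp': "low kn (pderiv p)" "low kn (pderiv q)" using lp lq low_pderiv by auto
    have "low (kn + 1 + kn) (q * pderiv p)" "low (kn + kn + 1) (pderiv q * p)"
      using low_mult[OF lq lp'(1)] low_mult[OF lp'(2) lp] by auto
    then have l: "low (kn + 1) (q * pderiv p - pderiv q * p)"
      by (intro low_diff) (auto elim: low_mono[rotated])
    have l2: "low 2 q" "low 2 p" using lq lp kn by (auto elim: low_mono[rotated])
    have "actF fD (q * pderiv p - pderiv q * p) u = 0" if u: "u \<in> U" for u
    proof -
      have "actF fD (q * pderiv p - pderiv q * p) u = actF fD q (actF fD p u) - actF fD p (actF fD q u)"
        by (rule brD[OF l2])
      also have "actF fD p u = 0" using Kp u unfolding K_def by auto
      also have "actF fD p (actF fD q u) = 0" using Kp stabF[OF lq u] unfolding K_def by auto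
      finally show ?thesis by (simp add: actF_u0[OF fD_in])
    qed
    then show ?thesis using l unfolding K_def by auto
  qed
  obtain N c where Nc: "\<exists>j\<le>N. c j \<noteq> 0" "\<forall>b\<in>Bs. (\<Sum>j\<le>N. sc (c j) (rho (D (k + int j)) b)) = 0"
  proof -
    have "\<exists>N c. (\<exists>j\<le>N. c j \<noteq> 0) \<and> (\<forall>b\<in>Bs. (\<Sum>j\<le>N. sc (c j) ((\<lambda>j. rho (D (k + int j))) j b)) = 0)"
    proof (rule FD[OF vs fB])
      fix j b assume "b \<in> Bs"
      then have "b \<in> U" unfolding U by (rule span_base)
      moreover have "inB A (D (k + int j))" by (rule inB_D) (use k in auto)
      moreover have "deg (D (k + int j)) \<ge> k" by simp
      ultimately have "rho (D (k + int j)) b \<in> U" using stab by blast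
      then show "rho (D (k + int j)) b \<in> span Bs" unfolding U .
    qed
    then obtain N c where "(\<exists>j\<le>N. c j \<noteq> 0)" "(\<forall>b\<in>Bs. (\<Sum>j\<le>N. sc (c j) (rho (D (k + int j)) b)) = 0)"
      by blast
    then show ?thesis by (rule that)
  qed
  define f where "f = (\<Sum>j\<le>N. monom (c j) (kn + 1 + j))"
  have f0: "f \<noteq> 0"
  proof -
    obtain j0 where j0: "j0 \<le> N" "c j0 \<noteq> 0" using Nc(1) by auto
    have "coeff f (kn + 1 + j0) = (\<Sum>j\<le>N. if j = j0 then c j else 0)"
      unfolding f_def coeff_sum coeff_monom by (intro sum.cong refl) simp
    also have "\<dots> = c j0" using j0 by simp
    finally show ?thesis using j0 by auto
  qed
  have lf: "low (kn + 1) f" unfolding f_def by (intro low_sum low_monom) auto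
  have Kf: "K f"
  proof -
    have "actF fD f b = 0" if b: "b \<in> Bs" for b
    proof -
      have "actF fD f b = (\<Sum>j\<le>N. actF fD (monom (c j) (kn + 1 + j)) b)"
        unfolding f_def by (rule add_hom_sum[where \<Phi>="\<lambda>p. actF fD p b"]) (rule actF_add)
      also have "\<dots> = (\<Sum>j\<le>N. sc (c j) (rho (D (k + int j)) b))"
        by (intro sum.cong) (auto simp: actF_monom kn)
      also have "\<dots> = 0" using Nc(2) b by auto
      finally show ?thesis .
    qed
    then have "\<forall>u\<in>U. actF fD f u = 0" unfolding U by (intro ballI) (rule actF_span0[OF fD_in], auto)
    then show ?thesis using lf unfolding K_def by auto
  qed
  have Kffj: "K (f * f * monom 1 j)" if j: "j \<ge> kn + 1" for j
  proof -
    define q where "q = f * monom (1 / of_nat (j + 1)) (j + 1)"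
    have lq: "low (kn + 1) q" unfolding q_def using low_mult[OF lf low_monom[of 0 "j+1"]] by simp
    have pd: "pderiv (monom (1 / of_nat (j + 1) :: complex) (j + 1)) = monom 1 j"
      by (simp add: pderiv_monom del: of_nat_Suc)
    have "q * pderiv f - pderiv q * f = smult (-1) (f * f * monom 1 j)"
      unfolding q_def pderiv_mult pd by (simp add: algebra_simps)
    then have "K (smult (-1) (f * f * monom 1 j))" using Kbr[OF Kf lq] by simp
    from Ksmult[OF this, of "-1"] show ?thesis by simp
  qed
  define J where "J = {P. \<forall>q. K (P * q)}"
  have P0: "f * f * monom 1 (kn + 1) \<in> J"
    unfolding J_def
  proof (intro CollectI allI)
    fix q :: "complex poly"
    have "f * f * monom 1 (kn + 1) * q = f * f * monom 1 (kn + 1) * (\<Sum>i\<le>degree q. monom (coeff q i) i)"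
      by (simp add: poly_as_sum_of_monoms)
    also have "\<dots> = (\<Sum>i\<le>degree q. smult (coeff q i) (f * f * monom 1 (kn + 1 + i)))"
      unfolding sum_distrib_left
      by (intro sum.cong refl) (simp add: mult_monom smult_monom mult.assoc[symmetric] flip: smult_monom_mult mult_smult_right)
    finally show "K (f * f * monom 1 (kn + 1) * q)"
      using Kffj by (auto intro!: Ksum Ksmult)
  qed
  have P0nz: "f * f * monom 1 (kn + 1) \<noteq> 0" using f0 by simp
  have Jder: "monom 1 (kn + 1) * pderiv P \<in> J" if P: "P \<in> J" for P
    unfolding J_def
  proof (intro CollectI allI)
    fix q :: "complex poly"
    let ?g = "monom (1::complex) (kn + 1)"
    have lg: "low (kn + 1) ?g" by (rule low_monom) auto
    have 1: "K (?g * pderiv (P * q) - pderiv ?g * (P * q))" using Kbr[OF _ lg] P unfolding J_def by auto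
    have 2: "K (P * (?g * pderiv q - pderiv ?g * q))" using P unfolding J_def by auto
    have "?g * pderiv (P * q) - pderiv ?g * (P * q) - P * (?g * pderiv q - pderiv ?g * q) = ?g * pderiv P * q"
      by (simp add: pderiv_mult algebra_simps)
    then show "K (?g * pderiv P * q)" using Kdiff[OF 1 2] by simp
  qed
  have "\<exists>M. monom 1 M \<in> J"
  proof (rule PL[of "kn + 1" J])
    show "P + Q \<in> J" if "P \<in> J" "Q \<in> J" for P Q
      using that Kadd unfolding J_def by (simp add: distrib_right)
    show "P * R \<in> J" if "P \<in> J" for P R
      using that unfolding J_def by (simp add: mult.assoc)
    show "monom 1 (kn + 1) * pderiv P \<in> J" if "P \<in> J" for P by (rule Jder[OF that])
    show "f * f * monom 1 (kn + 1) \<in> J" by (rule P0)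
    show "f * f * monom 1 (kn + 1) \<noteq> 0" by (rule P0nz)
  qed simp
  then obtain M where M: "monom 1 M \<in> J" by blast
  show ?thesis
  proof (intro exI[of _ "int M"] allI impI ballI)
    fix i u assume i: "int M \<le> i" and u: "u \<in> U"
    define n where "n = nat (i + 1)"
    have n: "n \<ge> M" "int n - 1 = i" using i unfolding n_def by auto
    have "K (monom 1 M * monom 1 (n - M))" using M unfolding J_def by blast
    moreover have "monom (1::complex) M * monom 1 (n - M) = monom 1 n" using n(1) by (simp add: mult_monom)
    ultimately have "K (monom 1 n)" by simp
    then have "actF fD (monom 1 n) u = 0" using u unfolding K_def by auto
    then show "rho (D i) u = 0" using n by (simp add: actF_monom)
  qed
qed


lemma C_I_kill:
  fixes U Bs and k :: int
  assumes IA: "\<And>j. j \<ge> 0 \<Longrightarrow> inB A (I j)"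
    and k: "k \<ge> 1" and fB: "finite Bs" and U: "U = span Bs"
    and stab: "\<And>g u. inB A g \<Longrightarrow> deg g \<ge> k \<Longrightarrow> u \<in> U \<Longrightarrow> rho g u \<in> U"
  shows "\<exists>N. \<forall>i\<ge>N. \<forall>u\<in>U. rho (I i) u = 0"
proof -
  define kn where "kn = nat k"
  have kn: "kn \<ge> 1" "int kn = k" using k unfolding kn_def by auto
  have fIin: "inB A (fI j)" for j by (rule IA) simp
  define K where "K p \<longleftrightarrow> low kn p \<and> (\<forall>u\<in>U. actF fI p u = 0)" for p
  have Kadd: "K (p + q)" if "K p" "K q" for p q
    using that unfolding K_def by (auto simp: low_add actF_add)
  have Kdiff: "K (p - q)" if "K p" "K q" for p q
    using that unfolding K_def by (auto simp: low_diff actF_diff)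
  have subU: "subspace U" unfolding U by simp
  have stabF: "actF fD q u \<in> U" if "low (kn + 1) q" "u \<in> U" for q u
  proof (rule actF_stab[OF subU])
    fix j assume "coeff q j \<noteq> 0"
    then have "j \<ge> kn + 1" using that(1) unfolding low_def by (meson not_le)
    then have "deg (fD j) \<ge> k" using kn by auto
    then show "rho (fD j) u \<in> U" using stab[OF fD_in _ that(2)] by auto
  qed
  have Kbr: "K (f * pderiv g)" if Kg: "K g" and lf: "low (kn + 1) f" for f g
  proof -
    have lg: "low kn g" using Kg unfolding K_def by auto
    have lg': "low (kn - 1) (pderiv g)" using lg kn by (intro low_pderiv) (simp add: Suc_diff_1)
    have "low (kn + 1 + (kn - 1)) (f * pderiv g)" using low_mult[OF lf lg'] .
    then have l: "low kn (f * pderiv g)" by (rule low_mono[rotated]) auto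
    have l2: "low 2 f" "low 1 g" using lf lg kn by (auto elim: low_mono[rotated])
    have "actF fI (f * pderiv g) u = 0" if u: "u \<in> U" for u
    proof -
      have "actF fI (f * pderiv g) u = actF fD f (actF fI g u) - actF fI g (actF fD f u)"
        by (rule brI[OF IA l2])
      also have "actF fI g u = 0" using Kg u unfolding K_def by auto
      also have "actF fI g (actF fD f u) = 0" using Kg stabF[OF lf u] unfolding K_def by auto
      finally show ?thesis by (simp add: actF_u0[OF fD_in])
    qed
    then show ?thesis using l unfolding K_def by auto
  qed
  obtain N c where Nc: "\<exists>j\<le>N. c j \<noteq> 0" "\<forall>b\<in>Bs. (\<Sum>j\<le>N. sc (c j) (rho (I (k + int j)) b)) = 0"
  proof -
    have "\<exists>N c. (\<exists>j\<le>N. c j \<noteq> 0) \<and> (\<forall>b\<in>Bs. (\<Sum>j\<le>N. sc (c j) ((\<lambda>j. rho (I (k + int j))) j b)) = 0)"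
    proof (rule FD[OF vs fB])
      fix j b assume "b \<in> Bs"
      then have "b \<in> U" unfolding U by (rule span_base)
      moreover have "inB A (I (k + int j))" by (rule IA) (use k in auto)
      moreover have "deg (I (k + int j)) \<ge> k" by simp
      ultimately have "rho (I (k + int j)) b \<in> U" using stab by blast
      then show "rho (I (k + int j)) b \<in> span Bs" unfolding U .
    qed
    then obtain N c where "(\<exists>j\<le>N. c j \<noteq> 0)" "(\<forall>b\<in>Bs. (\<Sum>j\<le>N. sc (c j) (rho (I (k + int j)) b)) = 0)"
      by blast
    then show ?thesis by (rule that)
  qed
  define g where "g = (\<Sum>j\<le>N. monom (c j) (kn + j))"
  have g0: "g \<noteq> 0"
  proof -
    obtain j0 where j0: "j0 \<le> N" "c j0 \<noteq> 0" using Nc(1) by auto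
    have "coeff g (kn + j0) = (\<Sum>j\<le>N. if j = j0 then c j else 0)"
      unfolding g_def coeff_sum coeff_monom by (intro sum.cong refl) simp
    also have "\<dots> = c j0" using j0 by simp
    finally show ?thesis using j0 by auto
  qed
  have lgk: "low kn g" unfolding g_def by (intro low_sum low_monom) auto
  have Kg: "K g"
  proof -
    have "actF fI g b = 0" if b: "b \<in> Bs" for b
    proof -
      have "actF fI g b = (\<Sum>j\<le>N. actF fI (monom (c j) (kn + j)) b)"
        unfolding g_def by (rule add_hom_sum[where \<Phi>="\<lambda>p. actF fI p b"]) (rule actF_add)
      also have "\<dots> = (\<Sum>j\<le>N. sc (c j) (rho (I (k + int j)) b))"
        by (intro sum.cong) (auto simp: actF_monom kn)
      also have "\<dots> = 0" using Nc(2) b by auto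
      finally show ?thesis .
    qed
    then have "\<forall>u\<in>U. actF fI g u = 0" unfolding U by (intro ballI) (rule actF_span0[OF fIin], auto)
    then show ?thesis using lgk unfolding K_def by auto
  qed
  have g'0: "pderiv g \<noteq> 0"
  proof
    assume "pderiv g = 0"
    then have "degree g = 0" by (simp add: pderiv_eq_0_iff)
    moreover have "coeff g 0 = 0" using lgk kn unfolding low_def by auto
    ultimately have "g = 0" by (metis degree_0_id pCons_0_0)
    then show False using g0 by simp
  qed
  define J where "J = {P. \<forall>q. K (P * q)}"
  let ?h = "monom (1::complex) (kn + 1)"
  have lh: "low (kn + 1) ?h" by (rule low_monom) auto
  have P0: "?h * pderiv g \<in> J"
    unfolding J_def
  proof (intro CollectI allI)
    fix q :: "complex poly"
    have "low (kn + 1 + 0) (?h * q)" by (rule low_mult[OF lh]) (simp add: low_def)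
    then have "K (?h * q * pderiv g)" using Kbr[OF Kg] by simp
    then show "K (?h * pderiv g * q)" by (simp add: ac_simps)
  qed
  have P0nz: "?h * pderiv g \<noteq> 0" using g'0 by simp
  have Jder: "?h * pderiv P \<in> J" if P: "P \<in> J" for P
    unfolding J_def
  proof (intro CollectI allI)
    fix q :: "complex poly"
    have 1: "K (?h * pderiv (P * q))" using Kbr[OF _ lh] P unfolding J_def by auto
    have 2: "K (P * (?h * pderiv q))" using P unfolding J_def by auto
    have "?h * pderiv (P * q) - P * (?h * pderiv q) = ?h * pderiv P * q"
      by (simp add: pderiv_mult algebra_simps)
    then show "K (?h * pderiv P * q)" using Kdiff[OF 1 2] by simp
  qed
  have "\<exists>M. monom 1 M \<in> J"
  proof (rule PL[of "kn + 1" J])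
    show "P + Q \<in> J" if "P \<in> J" "Q \<in> J" for P Q
      using that Kadd unfolding J_def by (simp add: distrib_right)
    show "P * R \<in> J" if "P \<in> J" for P R
      using that unfolding J_def by (simp add: mult.assoc)
    show "?h * pderiv P \<in> J" if "P \<in> J" for P by (rule Jder[OF that])
    show "?h * pderiv g \<in> J" by (rule P0)
    show "?h * pderiv g \<noteq> 0" by (rule P0nz)
  qed simp
  then obtain M where M: "monom 1 M \<in> J" by blast
  show ?thesis
  proof (intro exI[of _ "int M"] allI impI ballI)
    fix i u assume i: "int M \<le> i" and u: "u \<in> U"
    define n where "n = nat i"
    have n: "n \<ge> M" "int n = i" using i unfolding n_def by auto
    have "K (monom 1 M * monom 1 (n - M))" using M unfolding J_def by blast
    moreover have "monom (1::complex) M * monom 1 (n - M) = monom 1 n" using n(1) by (simp add: mult_monom)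
    ultimately have "K (monom 1 n)" by simp
    then have "actF fI (monom 1 n) u = 0" using u unfolding K_def by auto
    then show "rho (I i) u = 0" using n by (simp add: actF_monom)
  qed
qed


lemma C_imp_B:
  assumes simp: "simple_module A sc rho" and C: "condC A sc rho"
  shows "condB A sc rho"
proof -
  obtain v0 :: 'v where v0: "v0 \<noteq> 0" using simp unfolding simple_module_def by auto
  obtain k where k: "k \<ge> 1" and Ck: "\<forall>v. \<exists>U. subspace U \<and> (\<exists>B. finite B \<and> U = span B) \<and> v \<in> U \<and>
       (\<forall>a \<in> upper A k. \<forall>u \<in> U. act sc rho a u \<in> U)"
    using C unfolding condC_def by blast
  from Ck obtain U where U0: "\<exists>B. finite B \<and> U = span B" "v0 \<in> U"
     and stA: "\<forall>a \<in> upper A k. \<forall>u \<in> U. act sc rho a u \<in> U"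
    by meson
  from U0(1) obtain Bs where U1': "finite Bs \<and> U = span Bs" by (rule exE)
  then have U1: "finite Bs" "U = span Bs" by simp_all
  have U: "finite Bs" "U = span Bs" "v0 \<in> U" using U0 U1 by auto
  have stab: "rho g u \<in> U" if "inB A g" "deg g \<ge> k" "u \<in> U" for g u
  proof -
    have "act sc rho (bv g) u \<in> U" using stA bv_upper[OF that(1,2)] that(3) by blast
    then show ?thesis by (simp add: act_bv)
  qed
  obtain N1 where N1: "\<forall>i\<ge>N1. \<forall>u\<in>U. rho (D i) u = 0"
    using C_D_kill[OF k U(1,2) stab] by blast
  obtain N2 where N2: "A = HV \<or> A = Wt \<Longrightarrow> \<forall>i\<ge>N2. \<forall>u\<in>U. rho (I i) u = 0"
  proof (cases "A = HV \<or> A = Wt")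
    case True
    have IA: "inB A (I j)" if "j \<ge> 0" for j using True that by auto
    show ?thesis using C_I_kill[OF IA k U(1,2) stab] that by blast
  next
    case False then show ?thesis using that by blast
  qed
  show ?thesis
  proof (rule basis_condB[OF v0, of "max 1 (max N1 N2)"])
    fix g assume g: "inB A g" "max 1 (max N1 N2) \<le> deg g"
    show "rho g v0 = 0"
    proof (cases g)
      case (D i) then show ?thesis using N1 g U(3) by auto
    next
      case (I i)
      then have "A = HV \<or> A = Wt" using g(1) by (cases A) auto
      then show ?thesis using N2 g U(3) I by auto
    qed (use g in auto)
  qed auto
qed

end

lemma lemma1_aux:
  fixes A :: alg and sc :: "complex \<Rightarrow> 'v::ab_group_add \<Rightarrow> 'v" and rho :: "gen \<Rightarrow> 'v \<Rightarrow> 'v"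
  assumes "simple_module A sc rho"
  shows "(condA A sc rho \<longleftrightarrow> condB A sc rho) \<and> (condA A sc rho \<longleftrightarrow> condC A sc rho)
         \<and> (condA A sc rho \<longleftrightarrow> condD A sc rho)"
proof -
  interpret hm A sc rho using assms unfolding simple_module_def by unfold_locales auto
  have AB: "condA A sc rho \<longleftrightarrow> condB A sc rho" using A_imp_B[OF assms] B_imp_A[OF assms] by blast
  have BC: "condB A sc rho \<longleftrightarrow> condC A sc rho" using B_imp_C[OF assms] C_imp_B[OF assms] by blast
  have BD: "condB A sc rho \<longleftrightarrow> condD A sc rho" using B_imp_D[OF assms] D_imp_B[OF assms] by blast
  show ?thesis using AB BC BD by simp
qed


theorem lemma1:
  fixes A :: alg and sc :: "complex \<Rightarrow> 'v::ab_group_add \<Rightarrow> 'v" and rho :: "gen \<Rightarrow> 'v \<Rightarrow> 'v"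
  assumes "simple_module A sc rho"
  shows "(condA A sc rho \<longleftrightarrow> condB A sc rho) \<and> (condA A sc rho \<longleftrightarrow> condC A sc rho)
         \<and> (condA A sc rho \<longleftrightarrow> condD A sc rho)"
  by (rule lemma1_aux[OF assms])

end
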